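(* For all integers $k,\ell\ge 0$, every blowup $G$ of $F_{k,\ell}$ satisfies $\chi(G)\le\lceil\frac54\omega(G)\rceil$.
   Context: For integers $k,\ell\ge 0$, $F_{k,\ell}$ is the graph whose vertex set is partitioned into $A,B,U,W,\{x,y,z\}$ where: $A=\{a_0,\dots,a_k\}$ is a clique, $U=\{u_1,\dots,u_k\}$ is a stable set, and the only edges between $A$ and $U$ are $a_iu_i$ ($1\le i\le k$); $B=\{b_0,\dots,b_\ell\}$ is a clique, $W=\{w_1,\dots,w_\ell\}$ is a stable set, and the only edges between $B$ and $W$ are $b_jw_j$ ($1\le j\le\ell$); $N(x)=A\cup U\cup W\cup\{y\}$, $N(y)=B\cup U\cup W\cup\{x\}$, $N(z)=A\cup B$. A blowup of $H$ is any graph whose vertex set can be partitioned into $|V(H)|$ (not necessarily non-empty) cliques $Q_v$, with $Q_u$ complete to $Q_v$ if $uv\in E(H)$ and no edges between them otherwise. *)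

theory Defs
  imports Complex_Main
begin

text \<open>Finite graphs are given by a finite vertex set V and an adjacency relation E;
  only pairs of distinct vertices of V are relevant.\<close>

definition is_coloring :: "'v set \<Rightarrow> ('v \<Rightarrow> 'v \<Rightarrow> bool) \<Rightarrow> nat \<Rightarrow> ('v \<Rightarrow> nat) \<Rightarrow> bool" where
  "is_coloring V E n c \<longleftrightarrow>
     (\<forall>v\<in>V. c v < n) \<and> (\<forall>u\<in>V. \<forall>v\<in>V. u \<noteq> v \<longrightarrow> E u v \<longrightarrow> c u \<noteq> c v)"

definition chromatic_number :: "'v set \<Rightarrow> ('v \<Rightarrow> 'v \<Rightarrow> bool) \<Rightarrow> nat" where
  "chromatic_number V E = (LEAST n. \<exists>c. is_coloring V E n c)"

definition is_clique :: "'v set \<Rightarrow> ('v \<Rightarrow> 'v \<Rightarrow> bool) \<Rightarrow> 'v set \<Rightarrow> bool" where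
  "is_clique V E Q \<longleftrightarrow> Q \<subseteq> V \<and> (\<forall>u\<in>Q. \<forall>v\<in>Q. u \<noteq> v \<longrightarrow> E u v)"

definition clique_number :: "'v set \<Rightarrow> ('v \<Rightarrow> 'v \<Rightarrow> bool) \<Rightarrow> nat" where
  "clique_number V E = Max (card ` {Q. is_clique V E Q})"

text \<open>Blowup: V is partitioned into (possibly empty) cliques Q_h = f^{-1}(h), h in V(H);
  Q_h complete to Q_h' if hh' is an edge of H, anticomplete otherwise.\<close>

definition is_blowup :: "'v set \<Rightarrow> ('v \<Rightarrow> 'v \<Rightarrow> bool) \<Rightarrow> 'h set \<Rightarrow> ('h \<Rightarrow> 'h \<Rightarrow> bool) \<Rightarrow> bool" where
  "is_blowup V E VH EH \<longleftrightarrow>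
     (\<exists>f. (\<forall>v\<in>V. f v \<in> VH) \<and>
          (\<forall>u\<in>V. \<forall>v\<in>V. u \<noteq> v \<longrightarrow> (E u v \<longleftrightarrow> (f u = f v \<or> EH (f u) (f v)))))"

datatype fvert = VA nat | VU nat | VB nat | VW nat | VX | VY | VZ

definition F_verts :: "nat \<Rightarrow> nat \<Rightarrow> fvert set" where
  "F_verts k l = VA ` {0..k} \<union> VU ` {1..k} \<union> VB ` {0..l} \<union> VW ` {1..l} \<union> {VX, VY, VZ}"

fun F_adj0 :: "fvert \<Rightarrow> fvert \<Rightarrow> bool" where
  "F_adj0 (VA i) (VA j) = (i \<noteq> j)"
| "F_adj0 (VA i) (VU j) = (i = j)"
| "F_adj0 (VB i) (VB j) = (i \<noteq> j)"
| "F_adj0 (VB i) (VW j) = (i = j)"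
| "F_adj0 VX (VA _) = True"
| "F_adj0 VX (VU _) = True"
| "F_adj0 VX (VW _) = True"
| "F_adj0 VX VY = True"
| "F_adj0 VY (VB _) = True"
| "F_adj0 VY (VU _) = True"
| "F_adj0 VY (VW _) = True"
| "F_adj0 VZ (VA _) = True"
| "F_adj0 VZ (VB _) = True"
| "F_adj0 _ _ = False"

definition F_edge :: "nat \<Rightarrow> nat \<Rightarrow> fvert \<Rightarrow> fvert \<Rightarrow> bool" where
  "F_edge k l u v \<longleftrightarrow> u \<in> F_verts k l \<and> v \<in> F_verts k l \<and> (F_adj0 u v \<or> F_adj0 v u)"

end

theory Submission
  imports Defs
begin


definition arc :: "nat \<Rightarrow> nat \<Rightarrow> nat \<Rightarrow> nat set" where
  "arc T s g = (\<lambda>j. (s + j) mod T) ` {..<g}"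

lemma mod_inj_aux:
  fixes x y T :: nat
  assumes "x \<le> y" "y < x + T" "x mod T = y mod T" shows "x = y"
proof -
  have "T dvd (y - x)" using assms(1,3) by (metis mod_eq_dvd_iff_nat)
  moreover have "y - x < T" using assms(1,2) by arith
  ultimately have "y - x = 0" by (metis dvd_imp_le le_antisym less_or_eq_imp_le not_less neq0_conv)
  thus ?thesis using assms(1) by simp
qed

lemma arc_card: assumes "g \<le> T" shows "card (arc T s g) = g"
proof -
  have "inj_on (\<lambda>j. (s + j) mod T) {..<g}"
  proof (rule inj_onI)
    fix i j assume i: "i \<in> {..<g}" and j: "j \<in> {..<g}" and e: "(s + i) mod T = (s + j) mod T"
    show "i = j"
    proof (cases "i \<le> j")
      case True
      have "s + i = s + j" using mod_inj_aux[of "s+i" "s+j" T] True i j e assms by auto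
      thus ?thesis by simp
    next
      case False
      have "s + j = s + i" using mod_inj_aux[of "s+j" "s+i" T] False i j e assms by auto
      thus ?thesis by simp
    qed
  qed
  thus ?thesis unfolding arc_def by (simp add: card_image)
qed

lemma arc_sub: assumes "g \<le> T" shows "arc T s g \<subseteq> {..<T}"
proof (cases "g = 0")
  case True thus ?thesis by (simp add: arc_def)
next
  case False
  hence "T > 0" using assms by simp
  thus ?thesis by (auto simp: arc_def)
qed

lemma arc_finite: "finite (arc T s g)" by (simp add: arc_def)

lemma arc_disj:
  assumes "a + m \<le> b" "b + n \<le> a + T"
  shows "arc T a m \<inter> arc T b n = {}"
proof (rule ccontr)
  assume "arc T a m \<inter> arc T b n \<noteq> {}"
  then obtain i j where i: "i < m" and j: "j < n" and e: "(a + i) mod T = (b + j) mod T"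
    unfolding arc_def by auto
  have "a + i = b + j" using mod_inj_aux[of "a+i" "b+j" T] i j e assms by auto
  thus False using i j assms by linarith
qed

lemma arc_shift: "arc T (T + s) g = arc T s g"
  unfolding arc_def by (simp add: add.assoc)

lemma c5:
  fixes T g1 g2 g3 g4 g5 :: nat
  assumes "g1+g2 \<le> T" "g2+g3 \<le> T" "g3+g4 \<le> T" "g4+g5 \<le> T" "g5+g1 \<le> T"
    "g1+g2+g3+g4+g5 \<le> 2*T"
  shows "\<exists>S1 S2 S3 S4 S5. S1 \<subseteq> {..<T} \<and> S2 \<subseteq> {..<T} \<and> S3 \<subseteq> {..<T} \<and> S4 \<subseteq> {..<T} \<and> S5 \<subseteq> {..<T}
    \<and> finite S1 \<and> finite S2 \<and> finite S3 \<and> finite S4 \<and> finite S5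
    \<and> card S1 = g1 \<and> card S2 = g2 \<and> card S3 = g3 \<and> card S4 = g4 \<and> card S5 = g5
    \<and> S1 \<inter> S2 = {} \<and> S2 \<inter> S3 = {} \<and> S3 \<inter> S4 = {} \<and> S4 \<inter> S5 = {} \<and> S5 \<inter> S1 = {}"
proof -
  define s4 where "s4 = max (g1+g2+g3) (g1+g5)"
  define s5 where "s5 = max g1 (s4 + g4 - T)"
  have h5: "s4 + g4 \<le> T + s5" unfolding s5_def by (auto simp: max_def)
  have h5b: "s5 + g5 \<le> T" unfolding s5_def s4_def using assms by (auto simp: max_def)
  have d12: "arc T 0 g1 \<inter> arc T g1 g2 = {}" by (rule arc_disj) (use assms in linarith)+
  have d23: "arc T g1 g2 \<inter> arc T (g1+g2) g3 = {}" by (rule arc_disj) (use assms in linarith)+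
  have d34: "arc T (g1+g2) g3 \<inter> arc T s4 g4 = {}" by (rule arc_disj) (use assms in \<open>auto simp: s4_def max_def\<close>)+
  have d45: "arc T s4 g4 \<inter> arc T (T + s5) g5 = {}"
    by (rule arc_disj) (use assms h5 in \<open>auto simp: s4_def s5_def max_def\<close>)+
  have d51: "arc T 0 g1 \<inter> arc T s5 g5 = {}"
    by (rule arc_disj) (use assms h5b in \<open>auto simp: s5_def max_def\<close>)+
  show ?thesis
    apply (rule exI[of _ "arc T 0 g1"], rule exI[of _ "arc T g1 g2"], rule exI[of _ "arc T (g1+g2) g3"],
        rule exI[of _ "arc T s4 g4"], rule exI[of _ "arc T s5 g5"])
    using d12 d23 d34 d45 d51 assms arc_shift[of T s5 g5]
    by (auto simp: arc_finite intro!: arc_sub arc_card)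
qed



lemma disjoint_family_ex:
  fixes n :: "'i \<Rightarrow> nat" and S :: "'a set"
  assumes "finite I" "finite S" "sum n I \<le> card S"
  shows "\<exists>P. (\<forall>i\<in>I. P i \<subseteq> S \<and> card (P i) = n i \<and> finite (P i)) \<and>
             (\<forall>i\<in>I. \<forall>j\<in>I. i \<noteq> j \<longrightarrow> P i \<inter> P j = {})"
  using assms
proof (induction I arbitrary: S rule: finite_induct)
  case empty thus ?case by auto
next
  case (insert i I)
  have "n i \<le> card S" using insert.prems insert.hyps by simp
  then obtain Pi where Pi: "Pi \<subseteq> S" "card Pi = n i" by (meson obtain_subset_with_card_n)
  have fPi: "finite Pi" using Pi insert.prems finite_subset by blast
  have "card (S - Pi) = card S - n i" using Pi fPi by (simp add: card_Diff_subset)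
  hence "sum n I \<le> card (S - Pi)" using insert.prems insert.hyps by simp
  then obtain P where P: "\<forall>j\<in>I. P j \<subseteq> S - Pi \<and> card (P j) = n j \<and> finite (P j)"
     "\<forall>j\<in>I. \<forall>j'\<in>I. j \<noteq> j' \<longrightarrow> P j \<inter> P j' = {}"
    using insert.IH[of "S - Pi"] insert.prems by auto
  show ?case
    apply (rule exI[of _ "P(i := Pi)"])
    using P Pi fPi insert.hyps by auto
qed

lemma sq_aux:
  fixes y w dd :: int assumes "w \<le> 4*dd" "0 \<le> w" shows "y*w - dd*w \<le> y*y"
proof -
  have a: "0 \<le> (2*y - w)^2" by simp
  have b: "w*w \<le> 4*dd*w" using mult_right_mono[OF assms] .
  have "(2*y - w)^2 = 4*y*y - 4*y*w + w*w" by (simp add: power2_eq_square algebra_simps)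
  thus ?thesis using a b by linarith
qed

lemma keybound_int:
  fixes y dd w z a bb R :: int
  assumes "dd < y" "y*R \<le> (y - dd)*a" "0 \<le> a" "a + z \<le> w" "y + bb \<le> w" "bb + z \<le> w" "w \<le> 4*dd"
    "0 \<le> z" "0 \<le> bb" "0 \<le> dd"
  shows "R \<le> y" "z + bb + R \<le> w + dd"
proof -
  have w0: "0 \<le> w" using assms by linarith
  have y0: "0 < y" using assms by linarith
  have s: "y*w - dd*w \<le> y*y" by (rule sq_aux) (use assms w0 in auto)
  have m1: "(y - dd)*a \<le> (y - dd)*(w - z)" by (rule mult_left_mono) (use assms in auto)
  have m2: "(y - dd)*(w - z) \<le> (y - dd)*w" by (rule mult_left_mono) (use assms in auto)
  have "y*R \<le> y*y" using assms(2) m1 m2 s by (simp add: algebra_simps)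
  thus "R \<le> y" using y0 by simp
  have "(y - dd)*(w - z) \<le> y*(w + dd - z - bb)"
  proof (cases "z \<le> y")
    case True
    have "y*(dd + y - z) \<le> y*(w + dd - z - bb)" by (rule mult_left_mono) (use assms in auto)
    moreover have "dd*(y - z) \<ge> 0" using True assms by simp
    moreover have "(y - dd)*(w - z) \<le> y*(dd + y - z)" using s \<open>dd*(y - z) \<ge> 0\<close>
      by (simp add: algebra_simps)
    ultimately show ?thesis by linarith
  next
    case False
    have "y*dd \<le> y*(w + dd - z - bb)" by (rule mult_left_mono) (use assms in auto)
    moreover have "(y - dd)*(w - z) \<le> (y - dd)*(w - y)" by (rule mult_left_mono) (use assms False in auto)
    moreover have "(y - dd)*(w - y) \<le> y*dd" using s by (simp add: algebra_simps)
    ultimately show ?thesis by linarith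
  qed
  hence "y*R \<le> y*(w + dd - z - bb)" using assms(2) m1 by linarith
  hence "R \<le> w + dd - z - bb" using y0 by simp
  thus "z + bb + R \<le> w + dd" by linarith
qed

lemma keybound:
  fixes Y d w Z A B :: nat and \<rho> a :: "nat \<Rightarrow> nat" and I :: "nat set"
  assumes "finite I" "\<forall>i\<in>I. Y * \<rho> i \<le> (Y - d) * a i" "\<forall>i\<in>I. \<rho> i \<le> Y - d" "sum a I \<le> A"
    "A + Z \<le> w" "Y + B \<le> w" "B + Z \<le> w" "w \<le> 4*d"
  shows "sum \<rho> I \<le> Y \<and> Z + B + sum \<rho> I \<le> w + d"
proof (cases "Y \<le> d")
  case True
  hence "sum \<rho> I = 0" using assms(1,3) by simp
  thus ?thesis using assms by simp
next
  case False
  have "Y * sum \<rho> I \<le> (Y - d) * sum a I"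
    unfolding sum_distrib_left using assms(2) by (intro sum_mono) auto
  also have "\<dots> \<le> (Y - d) * A" using assms(4) by simp
  finally have h: "Y * sum \<rho> I \<le> (Y - d) * A" .
  have hi: "int Y * int (sum \<rho> I) \<le> (int Y - int d) * int A"
    using h False by (metis of_nat_diff of_nat_le_iff of_nat_mult less_or_eq_imp_le not_le)
  have "int (sum \<rho> I) \<le> int Y" "int Z + int B + int (sum \<rho> I) \<le> int w + int d"
    using keybound_int[OF _ hi, of Z w B] False assms by auto
  thus ?thesis by linarith
qed



lemma term_aux:
  fixes Y a d :: nat shows "Y * (min a Y - d) \<le> (Y - d) * a"
proof (cases "a \<le> Y")
  case True
  have "d * a \<le> Y * d" using True by (simp add: mult.commute)
  hence "Y * a - Y * d \<le> Y * a - d * a" by (rule diff_le_mono2)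
  thus ?thesis using True by (simp add: diff_mult_distrib2 diff_mult_distrib mult.commute)
next
  case False
  hence "Y * (Y - d) \<le> a * (Y - d)" by (intro mult_right_mono) auto
  thus ?thesis using False by (simp add: mult.commute)
qed

lemma L3_aux: fixes a u X Y w d :: nat assumes "a + u + X \<le> w" "X + Y + u \<le> w"
  shows "a - (min a Y - d) + X + Y + u \<le> w + d"
proof (cases "a \<le> Y")
  case True
  hence "min a Y = a" by simp
  thus ?thesis using assms True by linarith
next
  case False
  hence "min a Y = Y" by simp
  thus ?thesis using assms False by linarith
qed

lemma F_verts_iff:
  "VA i \<in> F_verts k l \<longleftrightarrow> i \<le> k" "VU i \<in> F_verts k l \<longleftrightarrow> 1 \<le> i \<and> i \<le> k"
  "VB j \<in> F_verts k l \<longleftrightarrow> j \<le> l" "VW j \<in> F_verts k l \<longleftrightarrow> 1 \<le> j \<and> j \<le> l"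
  "VX \<in> F_verts k l" "VY \<in> F_verts k l" "VZ \<in> F_verts k l"
  by (auto simp: F_verts_def)

lemma weighted_coloring:
  fixes k l w N :: nat and q :: "fvert \<Rightarrow> nat"
  assumes hN: "w \<le> N" "5*w \<le> 4*N"
    and E1: "q VZ + (\<Sum>i=0..k. q (VA i)) \<le> w"
    and E2: "q VX + (\<Sum>i=0..k. q (VA i)) \<le> w"
    and E3: "q VX + q VY \<le> w"
    and E4: "q VY + (\<Sum>j=0..l. q (VB j)) \<le> w"
    and E5: "q VZ + (\<Sum>j=0..l. q (VB j)) \<le> w"
    and U1: "\<forall>i\<in>{1..k}. q (VA i) + q (VU i) + q VX \<le> w"
    and U2: "\<forall>i\<in>{1..k}. q VX + q VY + q (VU i) \<le> w"
    and W1: "\<forall>j\<in>{1..l}. q (VB j) + q (VW j) + q VY \<le> w"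
    and W2: "\<forall>j\<in>{1..l}. q VX + q VY + q (VW j) \<le> w"
  shows "\<exists>C. (\<forall>h\<in>F_verts k l. C h \<subseteq> {..<N} \<and> finite (C h) \<and> q h \<le> card (C h)) \<and>
             (\<forall>h\<in>F_verts k l. \<forall>h'\<in>F_verts k l. F_adj0 h h' \<longrightarrow> C h \<inter> C h' = {})"
proof -
  define d where "d = N - w"
  define X where "X = q VX"
  define Y where "Y = q VY"
  define Z where "Z = q VZ"
  define a where "a = (\<lambda>i. q (VA i))"
  define b where "b = (\<lambda>j. q (VB j))"
  define A where "A = (\<Sum>i=0..k. a i)"
  define B where "B = (\<Sum>j=0..l. b j)"
  define \<rho> where "\<rho> = (\<lambda>i. if i = 0 then 0 else min (a i) Y - d)"
  define \<sigma> where "\<sigma> = (\<lambda>j. if j = 0 then 0 else min (b j) X - d)"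
  define RA where "RA = (\<Sum>i=0..k. \<rho> i)"
  define RB where "RB = (\<Sum>j=0..l. \<sigma> j)"
  have Nd: "N = w + d" and w4: "w \<le> 4*d" using hN unfolding d_def by auto
  have e1: "Z + A \<le> w" and e2: "X + A \<le> w" and e3: "X + Y \<le> w" and e4: "Y + B \<le> w" and e5: "Z + B \<le> w"
    using E1 E2 E3 E4 E5 unfolding X_def Y_def Z_def A_def B_def a_def b_def by auto
  have kA: "RA \<le> Y \<and> Z + B + RA \<le> w + d"
    unfolding RA_def
    by (rule keybound[of "{0..k}" Y \<rho> d a A]) (use e1 e4 e5 w4 term_aux in \<open>auto simp: \<rho>_def A_def\<close>)
  have kB: "RB \<le> X \<and> Z + A + RB \<le> w + d"
    unfolding RB_def
    by (rule keybound[of "{0..l}" X \<sigma> d b B]) (use e1 e2 e5 w4 term_aux in \<open>auto simp: \<sigma>_def B_def add.commute\<close>)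
  have RAA: "RA \<le> A" unfolding RA_def A_def by (rule sum_mono) (auto simp: \<rho>_def)
  have RBB: "RB \<le> B" unfolding RB_def B_def by (rule sum_mono) (auto simp: \<sigma>_def)
  define T where "T = N - RA - RB"
  have TN: "T + RA + RB = N" using kA kB e3 hN unfolding T_def by linarith
  have W2N: "Z + A + X + Y + B \<le> 2*N" using e1 e2 e3 e4 e5 hN by linarith
  obtain Sz SA Sx Sy SB where S: "Sz \<subseteq> {..<T}" "SA \<subseteq> {..<T}" "Sx \<subseteq> {..<T}" "Sy \<subseteq> {..<T}" "SB \<subseteq> {..<T}"
    "finite Sz" "finite SA" "finite Sx" "finite Sy" "finite SB"
    "card Sz = Z" "card SA = A - RA" "card Sx = X - RB" "card Sy = Y - RA" "card SB = B - RB"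
    "Sz \<inter> SA = {}" "SA \<inter> Sx = {}" "Sx \<inter> Sy = {}" "Sy \<inter> SB = {}" "SB \<inter> Sz = {}"
  proof -
    define A' where "A' = A - RA"
    have A': "A = RA + A'" using RAA unfolding A'_def by linarith
    define B' where "B' = B - RB"
    have B': "B = RB + B'" using RBB unfolding B'_def by linarith
    define X' where "X' = X - RB"
    have X': "X = RB + X'" using kB unfolding X'_def by linarith
    define Y' where "Y' = Y - RA"
    have Y': "Y = RA + Y'" using kA unfolding Y'_def by linarith
    have h1: "Z + A' \<le> T" using kB TN Nd A' by linarith
    have h2: "A' + X' \<le> T" using e2 TN hN A' X' by linarith
    have h3: "X' + Y' \<le> T" using e3 TN hN X' Y' by linarith
    have h4: "Y' + B' \<le> T" using e4 TN hN Y' B' by linarith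
    have h5: "B' + Z \<le> T" using kA TN Nd B' by linarith
    have h6: "Z + A' + X' + Y' + B' \<le> 2*T" using W2N TN A' B' X' Y' by linarith
    have "A - RA = A'" "B - RB = B'" "X - RB = X'" "Y - RA = Y'" using A' B' X' Y' by simp_all
    note eqs = this
    from c5[OF h1 h2 h3 h4 h5 h6] obtain S1 S2 S3 S4 S5 where H:
      "S1 \<subseteq> {..<T}" "S2 \<subseteq> {..<T}" "S3 \<subseteq> {..<T}" "S4 \<subseteq> {..<T}" "S5 \<subseteq> {..<T}"
      "finite S1" "finite S2" "finite S3" "finite S4" "finite S5"
      "card S1 = Z" "card S2 = A'" "card S3 = X'" "card S4 = Y'" "card S5 = B'"
      "S1 \<inter> S2 = {}" "S2 \<inter> S3 = {}" "S3 \<inter> S4 = {}" "S4 \<inter> S5 = {}" "S5 \<inter> S1 = {}"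
      by (elim exE conjE) blast
    show ?thesis apply (rule that[of S1 S2 S3 S4 S5]) using H by (simp_all add: eqs)
  qed
  have TleN: "T \<le> N" using TN by linarith
  define QA where "QA = {T..<T+RA}"
  define QB where "QB = {T+RA..<N}"
  have cQA: "card QA = RA" and cQB: "card QB = RB" using TN unfolding QA_def QB_def by auto
  have fQ: "finite QA" "finite QB" unfolding QA_def QB_def by auto
  have QAB: "QA \<inter> QB = {}" unfolding QA_def QB_def by auto
  have QN: "QA \<subseteq> {..<N}" "QB \<subseteq> {..<N}" using TN unfolding QA_def QB_def by auto
  have lowQ: "\<And>S. S \<subseteq> {..<T} \<Longrightarrow> S \<inter> QA = {} \<and> S \<inter> QB = {}" unfolding QA_def QB_def by auto
  have lowN: "\<And>S. S \<subseteq> {..<T} \<Longrightarrow> S \<subseteq> {..<N}" using TleN by auto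
  have \<rho>a: "\<forall>i\<in>{0..k}. \<rho> i \<le> a i" by (auto simp: \<rho>_def)
  have \<sigma>b: "\<forall>j\<in>{0..l}. \<sigma> j \<le> b j" by (auto simp: \<sigma>_def)
  obtain P where P: "\<forall>i\<in>{0..k}. P i \<subseteq> QA \<and> card (P i) = \<rho> i \<and> finite (P i)"
      "\<forall>i\<in>{0..k}. \<forall>j\<in>{0..k}. i \<noteq> j \<longrightarrow> P i \<inter> P j = {}"
    using disjoint_family_ex[of "{0..k}" QA \<rho>] fQ cQA unfolding RA_def by auto
  have "(\<Sum>i=0..k. a i - \<rho> i) = A - RA" unfolding A_def RA_def using \<rho>a by (intro sum_subtractf_nat) auto
  then obtain P' where P': "\<forall>i\<in>{0..k}. P' i \<subseteq> SA \<and> card (P' i) = a i - \<rho> i \<and> finite (P' i)"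
      "\<forall>i\<in>{0..k}. \<forall>j\<in>{0..k}. i \<noteq> j \<longrightarrow> P' i \<inter> P' j = {}"
    using disjoint_family_ex[of "{0..k}" SA "\<lambda>i. a i - \<rho> i"] S by auto
  obtain PB where PB: "\<forall>j\<in>{0..l}. PB j \<subseteq> QB \<and> card (PB j) = \<sigma> j \<and> finite (PB j)"
      "\<forall>i\<in>{0..l}. \<forall>j\<in>{0..l}. i \<noteq> j \<longrightarrow> PB i \<inter> PB j = {}"
    using disjoint_family_ex[of "{0..l}" QB \<sigma>] fQ cQB unfolding RB_def by auto
  have "(\<Sum>j=0..l. b j - \<sigma> j) = B - RB" unfolding B_def RB_def using \<sigma>b by (intro sum_subtractf_nat) auto
  then obtain PB' where PB': "\<forall>j\<in>{0..l}. PB' j \<subseteq> SB \<and> card (PB' j) = b j - \<sigma> j \<and> finite (PB' j)"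
      "\<forall>i\<in>{0..l}. \<forall>j\<in>{0..l}. i \<noteq> j \<longrightarrow> PB' i \<inter> PB' j = {}"
    using disjoint_family_ex[of "{0..l}" SB "\<lambda>j. b j - \<sigma> j"] S by auto
  define CX where "CX = Sx \<union> QB"
  define CY where "CY = Sy \<union> QA"
  have cCX: "card CX = X" unfolding CX_def using S lowQ[of Sx] fQ cQB kB by (simp add: card_Un_disjoint)
  have cCY: "card CY = Y" unfolding CY_def using S lowQ[of Sy] fQ cQA kA by (simp add: card_Un_disjoint)
  have fC: "finite CX" "finite CY" unfolding CX_def CY_def using S fQ by auto
  have CXN: "CX \<subseteq> {..<N}" "CY \<subseteq> {..<N}" unfolding CX_def CY_def using S QN lowN by blast+
  have "\<forall>i\<in>{1..k}. \<exists>U. U \<subseteq> {..<N} - (P i \<union> P' i \<union> CX \<union> CY) \<and> card U = q (VU i)"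
  proof
    fix i assume i: "i \<in> {1..k}"
    hence i0: "i \<in> {0..k}" by auto
    let ?M = "P i \<union> P' i \<union> CX \<union> CY"
    have f1: "P i \<subseteq> QA \<union> QB" "finite (P i)" "P' i \<subseteq> SA" "finite (P' i)" using P P' i0 by auto
    have "P i \<subseteq> CY" using P i0 unfolding CY_def by auto
    hence Meq: "?M = P' i \<union> CX \<union> CY" by blast
    have c1: "card (P' i \<union> CX \<union> CY) \<le> card (P' i \<union> CX) + card CY" by (rule card_Un_le)
    have c2: "card (P' i \<union> CX) \<le> card (P' i) + card CX" by (rule card_Un_le)
    have "card ?M \<le> card (P' i) + card CX + card CY"
      unfolding Meq using c1 c2 by linarith
    hence cM: "card ?M \<le> (a i - \<rho> i) + X + Y" using P' i0 cCX cCY by simp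
    have fM: "finite ?M" using f1 fC by simp
    have "SA \<subseteq> {..<N}" using lowN S by blast
    hence MN: "?M \<subseteq> {..<N}" using f1 QN CXN by blast
    have L3: "(a i - \<rho> i) + X + Y + q (VU i) \<le> N"
    proof -
      have "\<rho> i = min (a i) Y - d" using i unfolding \<rho>_def by auto
      moreover have "a i + q (VU i) + X \<le> w" "X + Y + q (VU i) \<le> w" using U1 U2 i unfolding a_def X_def Y_def by auto
      ultimately show ?thesis using L3_aux[of "a i" "q (VU i)" X w Y d] Nd by simp
    qed
    have "card ({..<N} - ?M) = N - card ?M" using MN fM by (simp add: card_Diff_subset)
    hence "q (VU i) \<le> card ({..<N} - ?M)" using cM L3 by linarith
    thus "\<exists>U. U \<subseteq> {..<N} - ?M \<and> card U = q (VU i)" by (meson obtain_subset_with_card_n)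
  qed
  then obtain Uf where Uf: "\<forall>i\<in>{1..k}. Uf i \<subseteq> {..<N} - (P i \<union> P' i \<union> CX \<union> CY) \<and> card (Uf i) = q (VU i)"
    by (rule bchoice[elim_format]) blast
  have "\<forall>j\<in>{1..l}. \<exists>U. U \<subseteq> {..<N} - (PB j \<union> PB' j \<union> CX \<union> CY) \<and> card U = q (VW j)"
  proof
    fix j assume j: "j \<in> {1..l}"
    hence j0: "j \<in> {0..l}" by auto
    let ?M = "PB j \<union> PB' j \<union> CX \<union> CY"
    have f1: "PB j \<subseteq> QA \<union> QB" "finite (PB j)" "PB' j \<subseteq> SB" "finite (PB' j)" using PB PB' j0 by auto
    have "PB j \<subseteq> CX" using PB j0 unfolding CX_def by auto
    hence Meq: "?M = PB' j \<union> CX \<union> CY" by blast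
    have c1: "card (PB' j \<union> CX \<union> CY) \<le> card (PB' j \<union> CX) + card CY" by (rule card_Un_le)
    have c2: "card (PB' j \<union> CX) \<le> card (PB' j) + card CX" by (rule card_Un_le)
    have "card ?M \<le> card (PB' j) + card CX + card CY"
      unfolding Meq using c1 c2 by linarith
    hence cM: "card ?M \<le> (b j - \<sigma> j) + X + Y" using PB' j0 cCX cCY by simp
    have fM: "finite ?M" using f1 fC by simp
    have "SB \<subseteq> {..<N}" using lowN S by blast
    hence MN: "?M \<subseteq> {..<N}" using f1 QN CXN by blast
    have L3: "(b j - \<sigma> j) + X + Y + q (VW j) \<le> N"
    proof -
      have "\<sigma> j = min (b j) X - d" using j unfolding \<sigma>_def by auto
      moreover have "b j + q (VW j) + Y \<le> w" "Y + X + q (VW j) \<le> w" using W1 W2 j unfolding b_def X_def Y_def by (auto simp: add.commute)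
      ultimately show ?thesis using L3_aux[of "b j" "q (VW j)" Y w X d] Nd by (simp add: add.commute add.left_commute)
    qed
    have "card ({..<N} - ?M) = N - card ?M" using MN fM by (simp add: card_Diff_subset)
    hence "q (VW j) \<le> card ({..<N} - ?M)" using cM L3 by linarith
    thus "\<exists>U. U \<subseteq> {..<N} - ?M \<and> card U = q (VW j)" by (meson obtain_subset_with_card_n)
  qed
  then obtain Wf where Wf: "\<forall>j\<in>{1..l}. Wf j \<subseteq> {..<N} - (PB j \<union> PB' j \<union> CX \<union> CY) \<and> card (Wf j) = q (VW j)"
    by (rule bchoice[elim_format]) blast
  define C where "C = (\<lambda>h. case h of VA i \<Rightarrow> P i \<union> P' i | VU i \<Rightarrow> Uf i | VB j \<Rightarrow> PB j \<union> PB' j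
     | VW j \<Rightarrow> Wf j | VX \<Rightarrow> CX | VY \<Rightarrow> CY | VZ \<Rightarrow> Sz)"
  have SN: "SA \<subseteq> {..<N}" "SB \<subseteq> {..<N}" "Sz \<subseteq> {..<N}" using S lowN by blast+
  have lA: "SA \<inter> QA = {}" "SA \<inter> QB = {}" "SB \<inter> QA = {}" "SB \<inter> QB = {}"
     "Sx \<inter> QA = {}" "Sy \<inter> QB = {}" "Sz \<inter> QA = {}" "Sz \<inter> QB = {}" "Sx \<inter> QB = {}" "Sy \<inter> QA = {}"
    using lowQ S by blast+
  have G1: "\<forall>h\<in>F_verts k l. C h \<subseteq> {..<N} \<and> finite (C h) \<and> q h \<le> card (C h)"
  proof
    fix h assume h: "h \<in> F_verts k l"
    show "C h \<subseteq> {..<N} \<and> finite (C h) \<and> q h \<le> card (C h)"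
    proof (cases h)
      case (VA i)
      hence i: "i \<in> {0..k}" using h by (simp add: F_verts_iff)
      have f: "P i \<subseteq> QA" "finite (P i)" "card (P i) = \<rho> i" "P' i \<subseteq> SA" "finite (P' i)" "card (P' i) = a i - \<rho> i"
        using P P' i by auto
      have dj: "P i \<inter> P' i = {}" using f lA by blast
      have "card (P i \<union> P' i) = a i" using card_Un_disjoint[OF f(2) f(5) dj] f \<rho>a i by simp
      thus ?thesis using VA f QN SN unfolding C_def a_def by auto
    next
      case (VU i)
      hence i: "i \<in> {1..k}" using h by (simp add: F_verts_iff)
      have "Uf i \<subseteq> {..<N}" "card (Uf i) = q (VU i)" using Uf i by auto
      moreover have "finite (Uf i)" using \<open>Uf i \<subseteq> {..<N}\<close> finite_subset by blast
      ultimately show ?thesis using VU unfolding C_def by auto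
    next
      case (VB j)
      hence j: "j \<in> {0..l}" using h by (simp add: F_verts_iff)
      have f: "PB j \<subseteq> QB" "finite (PB j)" "card (PB j) = \<sigma> j" "PB' j \<subseteq> SB" "finite (PB' j)" "card (PB' j) = b j - \<sigma> j"
        using PB PB' j by auto
      have dj: "PB j \<inter> PB' j = {}" using f lA by blast
      have "card (PB j \<union> PB' j) = b j" using card_Un_disjoint[OF f(2) f(5) dj] f \<sigma>b j by simp
      thus ?thesis using VB f QN SN unfolding C_def b_def by auto
    next
      case (VW j)
      hence j: "j \<in> {1..l}" using h by (simp add: F_verts_iff)
      have "Wf j \<subseteq> {..<N}" "card (Wf j) = q (VW j)" using Wf j by auto
      moreover have "finite (Wf j)" using \<open>Wf j \<subseteq> {..<N}\<close> finite_subset by blast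
      ultimately show ?thesis using VW unfolding C_def by auto
    next
      case VX thus ?thesis using CXN fC cCX unfolding C_def X_def by auto
    next
      case VY thus ?thesis using CXN fC cCY unfolding C_def Y_def by auto
    next
      case VZ thus ?thesis using SN S unfolding C_def Z_def by auto
    qed
  qed
  have CA: "C (VA i) \<subseteq> (QA \<union> SA)" if "i \<le> k" for i
  proof -
    have "P i \<subseteq> QA" "P' i \<subseteq> SA" using P P' that by auto
    thus ?thesis by (simp add: C_def) blast
  qed
  have CB: "C (VB j) \<subseteq> (QB \<union> SB)" if "j \<le> l" for j
  proof -
    have "PB j \<subseteq> QB" "PB' j \<subseteq> SB" using PB PB' that by auto
    thus ?thesis by (simp add: C_def) blast
  qed
  have dAA: "\<And>i j. i \<le> k \<Longrightarrow> j \<le> k \<Longrightarrow> i \<noteq> j \<Longrightarrow> C (VA i) \<inter> C (VA j) = {}"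
  proof -
    fix i j assume ij: "i \<le> k" "j \<le> k" "i \<noteq> j"
    have "P i \<inter> P j = {}" "P' i \<inter> P' j = {}" using P(2) P'(2) ij by auto
    moreover have "P i \<subseteq> QA" "P j \<subseteq> QA" "P' i \<subseteq> SA" "P' j \<subseteq> SA" using P P' ij by auto
    ultimately show "C (VA i) \<inter> C (VA j) = {}" using lA unfolding C_def by auto
  qed
  have dBB: "\<And>i j. i \<le> l \<Longrightarrow> j \<le> l \<Longrightarrow> i \<noteq> j \<Longrightarrow> C (VB i) \<inter> C (VB j) = {}"
  proof -
    fix i j assume ij: "i \<le> l" "j \<le> l" "i \<noteq> j"
    have "PB i \<inter> PB j = {}" "PB' i \<inter> PB' j = {}" using PB(2) PB'(2) ij by auto
    moreover have "PB i \<subseteq> QB" "PB j \<subseteq> QB" "PB' i \<subseteq> SB" "PB' j \<subseteq> SB" using PB PB' ij by auto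
    ultimately show "C (VB i) \<inter> C (VB j) = {}" using lA unfolding C_def by auto
  qed
  have dAU: "C (VA i) \<inter> C (VU i) = {}" if "1 \<le> i" "i \<le> k" for i
  proof -
    have "Uf i \<subseteq> {..<N} - (P i \<union> P' i \<union> CX \<union> CY)" using Uf that by auto
    thus ?thesis by (simp add: C_def) blast
  qed
  have dBW: "C (VB j) \<inter> C (VW j) = {}" if "1 \<le> j" "j \<le> l" for j
  proof -
    have "Wf j \<subseteq> {..<N} - (PB j \<union> PB' j \<union> CX \<union> CY)" using Wf that by auto
    thus ?thesis by (simp add: C_def) blast
  qed
  have dXU: "C VX \<inter> C (VU i) = {}" if "1 \<le> i" "i \<le> k" for i
  proof -
    have "Uf i \<subseteq> {..<N} - (P i \<union> P' i \<union> CX \<union> CY)" using Uf that by auto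
    thus ?thesis by (simp add: C_def) blast
  qed
  have dYU: "C VY \<inter> C (VU i) = {}" if "1 \<le> i" "i \<le> k" for i
  proof -
    have "Uf i \<subseteq> {..<N} - (P i \<union> P' i \<union> CX \<union> CY)" using Uf that by auto
    thus ?thesis by (simp add: C_def) blast
  qed
  have dXW: "C VX \<inter> C (VW j) = {}" if "1 \<le> j" "j \<le> l" for j
  proof -
    have "Wf j \<subseteq> {..<N} - (PB j \<union> PB' j \<union> CX \<union> CY)" using Wf that by auto
    thus ?thesis by (simp add: C_def) blast
  qed
  have dYW: "C VY \<inter> C (VW j) = {}" if "1 \<le> j" "j \<le> l" for j
  proof -
    have "Wf j \<subseteq> {..<N} - (PB j \<union> PB' j \<union> CX \<union> CY)" using Wf that by auto
    thus ?thesis by (simp add: C_def) blast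
  qed
  have dXA: "\<And>i. i \<le> k \<Longrightarrow> C VX \<inter> C (VA i) = {}"
  proof -
    fix i assume "i \<le> k"
    hence "C (VA i) \<subseteq> QA \<union> SA" using CA by blast
    moreover have "CX \<inter> (QA \<union> SA) = {}" unfolding CX_def using lA(5) S(17) QAB lA(2) by blast
    ultimately show "C VX \<inter> C (VA i) = {}" unfolding C_def by auto
  qed
  have dZA: "\<And>i. i \<le> k \<Longrightarrow> C VZ \<inter> C (VA i) = {}"
  proof -
    fix i assume "i \<le> k"
    hence "C (VA i) \<subseteq> QA \<union> SA" using CA by blast
    moreover have "Sz \<inter> (QA \<union> SA) = {}" using lA(7) S(16) by blast
    ultimately show "C VZ \<inter> C (VA i) = {}" unfolding C_def by auto
  qed
  have dYB: "\<And>j. j \<le> l \<Longrightarrow> C VY \<inter> C (VB j) = {}"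
  proof -
    fix j assume "j \<le> l"
    hence "C (VB j) \<subseteq> QB \<union> SB" using CB by blast
    moreover have "CY \<inter> (QB \<union> SB) = {}" unfolding CY_def using lA(6) S(19) QAB lA(3) by blast
    ultimately show "C VY \<inter> C (VB j) = {}" unfolding C_def by auto
  qed
  have dZB: "\<And>j. j \<le> l \<Longrightarrow> C VZ \<inter> C (VB j) = {}"
  proof -
    fix j assume "j \<le> l"
    hence "C (VB j) \<subseteq> QB \<union> SB" using CB by blast
    moreover have "Sz \<inter> (QB \<union> SB) = {}" using lA(8) S(20) by blast
    ultimately show "C VZ \<inter> C (VB j) = {}" unfolding C_def by auto
  qed
  have dXY: "C VX \<inter> C VY = {}" unfolding C_def CX_def CY_def using S(18) lA(5) lA(6) QAB by auto
  have G2: "\<forall>h\<in>F_verts k l. \<forall>h'\<in>F_verts k l. F_adj0 h h' \<longrightarrow> C h \<inter> C h' = {}"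
  proof (intro ballI impI)
    fix h h' assume hh: "h \<in> F_verts k l" "h' \<in> F_verts k l" "F_adj0 h h'"
    show "C h \<inter> C h' = {}"
      using hh by (cases h; cases h') (simp_all add: F_verts_iff dAA dBB dAU dBW dXU dYU dXW dYW dXA dZA dYB dZB dXY)
  qed
  show ?thesis using G1 G2 by blast
qed



lemma F_edge_sym: "F_edge k l h h' \<longleftrightarrow> F_edge k l h' h" unfolding F_edge_def by auto

lemma clique_bound:
  fixes V :: "'v set" and E and f :: "'v \<Rightarrow> fvert"
  assumes fin: "finite V"
    and fE: "\<forall>u\<in>V. \<forall>v\<in>V. u \<noteq> v \<longrightarrow> (E u v \<longleftrightarrow> (f u = f v \<or> F_edge k l (f u) (f v)))"
    and K: "finite K" "\<forall>h\<in>K. \<forall>h'\<in>K. h \<noteq> h' \<longrightarrow> F_edge k l h h'"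
  shows "(\<Sum>h\<in>K. card {v\<in>V. f v = h}) \<le> clique_number V E"
proof -
  let ?Q = "\<lambda>h. {v\<in>V. f v = h}"
  let ?U = "\<Union>(?Q ` K)"
  have cl: "is_clique V E ?U" unfolding is_clique_def using fE K(2) by auto
  have "card ?U = (\<Sum>h\<in>K. card (?Q h))"
    by (rule card_UN_disjoint) (use K fin in auto)
  moreover have "card ?U \<le> clique_number V E"
    unfolding clique_number_def
  proof (rule Max_ge)
    have "{Q. is_clique V E Q} \<subseteq> Pow V" unfolding is_clique_def by auto
    hence "finite {Q. is_clique V E Q}" using fin finite_Pow_iff finite_subset by metis
    thus "finite (card ` {Q. is_clique V E Q})" by simp
    show "card ?U \<in> card ` {Q. is_clique V E Q}" using cl by auto
  qed
  ultimately show ?thesis by simp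
qed

theorem theorem5p12:
  fixes k l :: nat and V :: "'v set" and E :: "'v \<Rightarrow> 'v \<Rightarrow> bool"
  assumes "finite V"
    and "is_blowup V E (F_verts k l) (F_edge k l)"
  shows "real (chromatic_number V E) \<le> of_int \<lceil>(5/4) * real (clique_number V E)\<rceil>"
proof -
  obtain f where fV: "\<forall>v\<in>V. f v \<in> F_verts k l"
    and fE: "\<forall>u\<in>V. \<forall>v\<in>V. u \<noteq> v \<longrightarrow> (E u v \<longleftrightarrow> (f u = f v \<or> F_edge k l (f u) (f v)))"
    using assms(2) unfolding is_blowup_def by blast
  define w where "w = clique_number V E"
  define q where "q = (\<lambda>h. card {v\<in>V. f v = h})"
  have CB: "\<And>K. finite K \<Longrightarrow> \<forall>h\<in>K. \<forall>h'\<in>K. h \<noteq> h' \<longrightarrow> F_edge k l h h' \<Longrightarrow> (\<Sum>h\<in>K. q h) \<le> w"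
    unfolding q_def w_def using clique_bound[OF assms(1) fE] by blast
  have sA: "(\<Sum>h\<in>insert c (VA ` {0..k}). q h) = q c + (\<Sum>i=0..k. q (VA i))" if "c = VX \<or> c = VZ" for c
  proof -
    have "c \<notin> VA ` {0..k}" using that by auto
    thus ?thesis by (simp add: sum.reindex inj_on_def)
  qed
  have sB: "(\<Sum>h\<in>insert c (VB ` {0..l}). q h) = q c + (\<Sum>j=0..l. q (VB j))" if "c = VY \<or> c = VZ" for c
  proof -
    have "c \<notin> VB ` {0..l}" using that by auto
    thus ?thesis by (simp add: sum.reindex inj_on_def)
  qed
  have E1: "q VZ + (\<Sum>i=0..k. q (VA i)) \<le> w"
    using CB[of "insert VZ (VA ` {0..k})"] sA[of VZ] by (auto simp: F_edge_def F_verts_iff)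
  have E2: "q VX + (\<Sum>i=0..k. q (VA i)) \<le> w"
    using CB[of "insert VX (VA ` {0..k})"] sA[of VX] by (auto simp: F_edge_def F_verts_iff)
  have E4: "q VY + (\<Sum>j=0..l. q (VB j)) \<le> w"
    using CB[of "insert VY (VB ` {0..l})"] sB[of VY] by (auto simp: F_edge_def F_verts_iff)
  have E5: "q VZ + (\<Sum>j=0..l. q (VB j)) \<le> w"
    using CB[of "insert VZ (VB ` {0..l})"] sB[of VZ] by (auto simp: F_edge_def F_verts_iff)
  have E3: "q VX + q VY \<le> w"
    using CB[of "{VX, VY}"] by (auto simp: F_edge_def F_verts_iff)
  have U1: "\<forall>i\<in>{1..k}. q (VA i) + q (VU i) + q VX \<le> w"
  proof
    fix i assume i: "i \<in> {1..k}"
    have "(\<Sum>h\<in>{VA i, VU i, VX}. q h) \<le> w" by (rule CB) (use i in \<open>auto simp: F_edge_def F_verts_iff\<close>)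
    thus "q (VA i) + q (VU i) + q VX \<le> w" by (simp add: add.assoc)
  qed
  have U2: "\<forall>i\<in>{1..k}. q VX + q VY + q (VU i) \<le> w"
  proof
    fix i assume i: "i \<in> {1..k}"
    have "(\<Sum>h\<in>{VX, VY, VU i}. q h) \<le> w" by (rule CB) (use i in \<open>auto simp: F_edge_def F_verts_iff\<close>)
    thus "q VX + q VY + q (VU i) \<le> w" by (simp add: add.assoc)
  qed
  have W1: "\<forall>j\<in>{1..l}. q (VB j) + q (VW j) + q VY \<le> w"
  proof
    fix j assume j: "j \<in> {1..l}"
    have "(\<Sum>h\<in>{VB j, VW j, VY}. q h) \<le> w" by (rule CB) (use j in \<open>auto simp: F_edge_def F_verts_iff\<close>)
    thus "q (VB j) + q (VW j) + q VY \<le> w" by (simp add: add.assoc)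
  qed
  have W2: "\<forall>j\<in>{1..l}. q VX + q VY + q (VW j) \<le> w"
  proof
    fix j assume j: "j \<in> {1..l}"
    have "(\<Sum>h\<in>{VX, VY, VW j}. q h) \<le> w" by (rule CB) (use j in \<open>auto simp: F_edge_def F_verts_iff\<close>)
    thus "q VX + q VY + q (VW j) \<le> w" by (simp add: add.assoc)
  qed
  define N where "N = nat \<lceil>(5/4) * real w\<rceil>"
  have Nge: "(5/4) * real w \<le> real N" unfolding N_def by linarith
  have hN1: "w \<le> N" using Nge by linarith
  have hN2: "5*w \<le> 4*N" using Nge by linarith
  obtain C where C1: "\<forall>h\<in>F_verts k l. C h \<subseteq> {..<N} \<and> finite (C h) \<and> q h \<le> card (C h)"
    and C2: "\<forall>h\<in>F_verts k l. \<forall>h'\<in>F_verts k l. F_adj0 h h' \<longrightarrow> C h \<inter> C h' = {}"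
    using weighted_coloring[OF hN1 hN2 E1 E2 E3 E4 E5 U1 U2 W1 W2] by blast
  define g where "g = (\<lambda>h. SOME g. g ` {v\<in>V. f v = h} \<subseteq> C h \<and> inj_on g {v\<in>V. f v = h})"
  have g: "g h ` {v\<in>V. f v = h} \<subseteq> C h \<and> inj_on (g h) {v\<in>V. f v = h}" if "h \<in> F_verts k l" for h
  proof -
    have "\<exists>g. g ` {v\<in>V. f v = h} \<subseteq> C h \<and> inj_on g {v\<in>V. f v = h}"
      by (rule card_le_inj) (use assms(1) C1 that in \<open>auto simp: q_def\<close>)
    thus ?thesis unfolding g_def by (rule someI_ex)
  qed
  define c where "c = (\<lambda>v. g (f v) v)"
  have cC: "c v \<in> C (f v)" if "v \<in> V" for v
    using g[of "f v"] fV that unfolding c_def by auto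
  have col: "is_coloring V E N c"
    unfolding is_coloring_def
  proof (intro conjI ballI impI)
    fix v assume v: "v \<in> V"
    show "c v < N" using cC[OF v] C1 fV v by auto
  next
    fix u v assume u: "u \<in> V" and v: "v \<in> V" and uv: "u \<noteq> v" and e: "E u v"
    show "c u \<noteq> c v"
    proof (cases "f u = f v")
      case True
      have "inj_on (g (f v)) {x\<in>V. f x = f v}" using g fV v by blast
      thus ?thesis using True u v uv unfolding c_def by (auto dest: inj_onD)
    next
      case False
      hence "F_edge k l (f u) (f v)" using fE u v uv e by blast
      hence "F_adj0 (f u) (f v) \<or> F_adj0 (f v) (f u)" unfolding F_edge_def by blast
      hence "C (f u) \<inter> C (f v) = {}" using C2 fV u v by blast
      thus ?thesis using cC[OF u] cC[OF v] by auto
    qed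
  qed
  have "chromatic_number V E \<le> N"
    unfolding chromatic_number_def by (rule Least_le) (use col in blast)
  hence "real (chromatic_number V E) \<le> real N" by simp
  also have "real N = of_int \<lceil>(5/4) * real w\<rceil>"
    unfolding N_def by (simp add: of_nat_nat)
  finally show ?thesis unfolding w_def .
qed


end
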